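(* Let $X$ be a hyperbolic approximation of $Z$. Any two vertices $v,v'\in V$ can be connected in $X$ by a geodesic which contains at most one horizontal edge; if it contains such an edge, this edge lies on the lowest level attained by the geodesic.
   Context: Hyperbolic approximation: let $(Z,d)$ be a bounded metric space with at least two points and fix $0<r\le1/6$. Let $k_0$ be the largest integer with $\operatorname{diam}Z<r^{k_0}$. For each integer $k\ge k_0$ choose a maximal $r^k$-separated subset $V_k\subset Z$. Vertex set $V=\bigsqcup_{k\ge k_0}V_k$ (disjoint union), level $\ell(v)=k$ for $v\in V_k$, ball $B(v)=\{z:d(z,v)<2r^k\}$ with closure $\overline B(v)$. Edges: $v,v'$ of equal level with $\overline B(v)\cap\overline B(v')\neq\emptyset$ (horizontal edges), or levels differing by one with the ball of the higher-level vertex contained in the ball of the lower-level one (radial edges). Path metric with unit edges, denoted $|vv'|$. *)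

theory Defs
  imports "HOL-Analysis.Analysis"
begin

definition mdiam :: "'a set \<Rightarrow> ('a \<Rightarrow> 'a \<Rightarrow> real) \<Rightarrow> real" where
  "mdiam Z d = Sup {d x y | x y. x \<in> Z \<and> y \<in> Z}"

definition separated_set :: "'a set \<Rightarrow> ('a \<Rightarrow> 'a \<Rightarrow> real) \<Rightarrow> real \<Rightarrow> 'a set \<Rightarrow> bool" where
  "separated_set Z d \<epsilon> S \<longleftrightarrow> S \<subseteq> Z \<and> (\<forall>x\<in>S. \<forall>y\<in>S. x \<noteq> y \<longrightarrow> d x y \<ge> \<epsilon>)"

definition maximal_separated :: "'a set \<Rightarrow> ('a \<Rightarrow> 'a \<Rightarrow> real) \<Rightarrow> real \<Rightarrow> 'a set \<Rightarrow> bool" where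
  "maximal_separated Z d \<epsilon> S \<longleftrightarrow> separated_set Z d \<epsilon> S \<and>
     (\<forall>T. separated_set Z d \<epsilon> T \<and> S \<subseteq> T \<longrightarrow> T = S)"

definition is_k0 :: "'a set \<Rightarrow> ('a \<Rightarrow> 'a \<Rightarrow> real) \<Rightarrow> real \<Rightarrow> int \<Rightarrow> bool" where
  "is_k0 Z d r k \<longleftrightarrow> mdiam Z d < r powi k \<and> (\<forall>j. mdiam Z d < r powi j \<longrightarrow> j \<le> k)"

definition hyp_approx :: "'a set \<Rightarrow> ('a \<Rightarrow> 'a \<Rightarrow> real) \<Rightarrow> real \<Rightarrow> int \<Rightarrow> (int \<Rightarrow> 'a set) \<Rightarrow> bool" where
  "hyp_approx Z d r k0 V \<longleftrightarrow>
     Metric_space Z d \<and> Metric_space.mbounded Z d Z \<and> (\<exists>x\<in>Z. \<exists>y\<in>Z. x \<noteq> y) \<and>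
     0 < r \<and> r \<le> 1/6 \<and> is_k0 Z d r k0 \<and>
     (\<forall>k\<ge>k0. maximal_separated Z d (r powi k) (V k))"

definition hvertices :: "int \<Rightarrow> (int \<Rightarrow> 'a set) \<Rightarrow> (int \<times> 'a) set" where
  "hvertices k0 V = {(k, x). k0 \<le> k \<and> x \<in> V k}"

definition hball :: "'a set \<Rightarrow> ('a \<Rightarrow> 'a \<Rightarrow> real) \<Rightarrow> real \<Rightarrow> int \<times> 'a \<Rightarrow> 'a set" where
  "hball Z d r v = {z \<in> Z. d z (snd v) < 2 * r powi (fst v)}"

definition hball_closure :: "'a set \<Rightarrow> ('a \<Rightarrow> 'a \<Rightarrow> real) \<Rightarrow> real \<Rightarrow> int \<times> 'a \<Rightarrow> 'a set" where
  "hball_closure Z d r v = Metric_space.mtopology Z d closure_of (hball Z d r v)"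

definition horizontal_edge :: "'a set \<Rightarrow> ('a \<Rightarrow> 'a \<Rightarrow> real) \<Rightarrow> real \<Rightarrow> int \<Rightarrow> (int \<Rightarrow> 'a set)
    \<Rightarrow> int \<times> 'a \<Rightarrow> int \<times> 'a \<Rightarrow> bool" where
  "horizontal_edge Z d r k0 V v w \<longleftrightarrow>
     v \<in> hvertices k0 V \<and> w \<in> hvertices k0 V \<and> v \<noteq> w \<and> fst v = fst w \<and>
     hball_closure Z d r v \<inter> hball_closure Z d r w \<noteq> {}"

definition radial_edge :: "'a set \<Rightarrow> ('a \<Rightarrow> 'a \<Rightarrow> real) \<Rightarrow> real \<Rightarrow> int \<Rightarrow> (int \<Rightarrow> 'a set)
    \<Rightarrow> int \<times> 'a \<Rightarrow> int \<times> 'a \<Rightarrow> bool" where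
  "radial_edge Z d r k0 V v w \<longleftrightarrow>
     v \<in> hvertices k0 V \<and> w \<in> hvertices k0 V \<and>
     ((fst w = fst v + 1 \<and> hball Z d r w \<subseteq> hball Z d r v) \<or>
      (fst v = fst w + 1 \<and> hball Z d r v \<subseteq> hball Z d r w))"

definition hedge :: "'a set \<Rightarrow> ('a \<Rightarrow> 'a \<Rightarrow> real) \<Rightarrow> real \<Rightarrow> int \<Rightarrow> (int \<Rightarrow> 'a set)
    \<Rightarrow> int \<times> 'a \<Rightarrow> int \<times> 'a \<Rightarrow> bool" where
  "hedge Z d r k0 V v w \<longleftrightarrow> horizontal_edge Z d r k0 V v w \<or> radial_edge Z d r k0 V v w"

definition hpath :: "'a set \<Rightarrow> ('a \<Rightarrow> 'a \<Rightarrow> real) \<Rightarrow> real \<Rightarrow> int \<Rightarrow> (int \<Rightarrow> 'a set)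
    \<Rightarrow> (int \<times> 'a) list \<Rightarrow> int \<times> 'a \<Rightarrow> int \<times> 'a \<Rightarrow> bool" where
  "hpath Z d r k0 V p v w \<longleftrightarrow> p \<noteq> [] \<and> hd p = v \<and> last p = w \<and>
     set p \<subseteq> hvertices k0 V \<and>
     (\<forall>i. Suc i < length p \<longrightarrow> hedge Z d r k0 V (p ! i) (p ! Suc i))"

definition hgeodesic :: "'a set \<Rightarrow> ('a \<Rightarrow> 'a \<Rightarrow> real) \<Rightarrow> real \<Rightarrow> int \<Rightarrow> (int \<Rightarrow> 'a set)
    \<Rightarrow> (int \<times> 'a) list \<Rightarrow> int \<times> 'a \<Rightarrow> int \<times> 'a \<Rightarrow> bool" where
  "hgeodesic Z d r k0 V p v w \<longleftrightarrow> hpath Z d r k0 V p v w \<and>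
     (\<forall>q. hpath Z d r k0 V q v w \<longrightarrow> length p \<le> length q)"

definition horizontal_positions :: "'a set \<Rightarrow> ('a \<Rightarrow> 'a \<Rightarrow> real) \<Rightarrow> real \<Rightarrow> int \<Rightarrow> (int \<Rightarrow> 'a set)
    \<Rightarrow> (int \<times> 'a) list \<Rightarrow> nat set" where
  "horizontal_positions Z d r k0 V p =
     {i. Suc i < length p \<and> horizontal_edge Z d r k0 V (p ! i) (p ! Suc i)}"

end

theory Submission imports Defs begin

locale HA =
  fixes Z :: "'a set" and d :: "'a \<Rightarrow> 'a \<Rightarrow> real" and r :: real and k0 :: int
    and V :: "int \<Rightarrow> 'a set"
  assumes ha: "hyp_approx Z d r k0 V"
begin

sublocale Metric_space Z d using ha by (simp add: hyp_approx_def)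

abbreviation "vert \<equiv> hvertices k0 V"
abbreviation "B \<equiv> hball Z d r"
abbreviation "C \<equiv> hball_closure Z d r"
abbreviation "hor \<equiv> horizontal_edge Z d r k0 V"
abbreviation "rad \<equiv> radial_edge Z d r k0 V"
abbreviation "edge \<equiv> hedge Z d r k0 V"
abbreviation "hp \<equiv> hpath Z d r k0 V"
abbreviation "hg \<equiv> hgeodesic Z d r k0 V"

lemma r_pos: "0 < r" and r_le: "r \<le> 1/6"
  using ha by (auto simp: hyp_approx_def)

lemma rk_pos: "0 < r powi k" using r_pos by simp

lemma powi_pred: "r powi k = r * r powi (k - 1)"
  using power_int_add_1'[of r "k - 1"] r_pos by simp

lemma maxsep: "k \<ge> k0 \<Longrightarrow> maximal_separated Z d (r powi k) (V k)"
  using ha by (auto simp: hyp_approx_def)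

lemma V_sub: "k \<ge> k0 \<Longrightarrow> V k \<subseteq> Z"
  using maxsep by (auto simp: maximal_separated_def separated_set_def)

lemma close:
  assumes "k \<ge> k0" "x \<in> Z"
  shows "\<exists>u\<in>V k. d x u < r powi k"
proof (rule ccontr)
  assume H: "\<not> ?thesis"
  have ms: "maximal_separated Z d (r powi k) (V k)" using maxsep assms by auto
  have "x \<notin> V k" using H assms rk_pos[of k] by force
  have "separated_set Z d (r powi k) (insert x (V k))"
    using ms H assms unfolding maximal_separated_def separated_set_def
    by (auto simp: commute)
  then have "insert x (V k) = V k" using ms unfolding maximal_separated_def by blast
  then show False using \<open>x \<notin> V k\<close> by blast
qed

lemma diam:
  assumes "x \<in> Z" "y \<in> Z" shows "d x y < r powi k0"
proof -
  have "mbounded Z" using ha by (simp add: hyp_approx_def)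
  then obtain c where c: "\<forall>x\<in>Z. \<forall>y\<in>Z. d x y \<le> c" by (auto simp: mbounded_alt)
  have "bdd_above {d x y | x y. x \<in> Z \<and> y \<in> Z}"
    using c by (auto intro!: bdd_aboveI[where M=c])
  then have "d x y \<le> mdiam Z d" unfolding mdiam_def
    by (rule cSup_upper[rotated]) (use assms in auto)
  moreover have "mdiam Z d < r powi k0" using ha by (simp add: hyp_approx_def is_k0_def)
  ultimately show ?thesis by simp
qed

lemma V0: assumes "x \<in> V k0" "y \<in> V k0" shows "x = y"
proof (rule ccontr)
  assume "x \<noteq> y"
  then have "d x y \<ge> r powi k0" using maxsep[of k0] assms
    by (auto simp: maximal_separated_def separated_set_def)
  moreover have "d x y < r powi k0" using diam V_sub[of k0] assms by auto
  ultimately show False by simp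
qed

lemma vert_in: "v \<in> vert \<Longrightarrow> snd v \<in> Z \<and> fst v \<ge> k0 \<and> snd v \<in> V (fst v)"
  unfolding hvertices_def using V_sub by fastforce

lemma B_sub: "B v \<subseteq> Z" by (auto simp: hball_def)

lemma B_C: "v \<in> vert \<Longrightarrow> snd v \<in> C v"
proof -
  assume v: "v \<in> vert"
  have "snd v \<in> B v" using vert_in[OF v] rk_pos[of "fst v"] by (auto simp: hball_def)
  moreover have "B v \<subseteq> C v" unfolding hball_closure_def
    by (rule closure_of_subset) (simp add: B_sub)
  ultimately show ?thesis by blast
qed

lemma C_sub: assumes "v \<in> vert" shows "C v \<subseteq> {z\<in>Z. d z (snd v) \<le> 2 * r powi fst v}"
proof -
  have "C v \<subseteq> mcball (snd v) (2 * r powi fst v)" unfolding hball_closure_def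
    by (rule closure_of_minimal) (use vert_in[OF assms] in \<open>auto simp: hball_def commute\<close>)
  then show ?thesis by (auto simp: commute)
qed

lemma C_mono: "B a \<subseteq> B b \<Longrightarrow> C a \<subseteq> C b"
  unfolding hball_closure_def by (rule closure_of_mono)

lemma hor_dist: assumes "hor a b" shows "d (snd a) (snd b) \<le> 4 * r powi fst a"
proof -
  have a: "a \<in> vert" and b: "b \<in> vert" and f: "fst a = fst b"
    using assms by (auto simp: horizontal_edge_def)
  obtain z where z: "z \<in> C a" "z \<in> C b" using assms by (auto simp: horizontal_edge_def)
  have "z \<in> Z" "d z (snd a) \<le> 2 * r powi fst a" "d z (snd b) \<le> 2 * r powi fst a"
    using z C_sub[OF a] C_sub[OF b] f by auto
  moreover have "d (snd a) (snd b) \<le> d (snd a) z + d z (snd b)"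
    using triangle vert_in a b \<open>z \<in> Z\<close> by blast
  ultimately show ?thesis by (simp add: commute)
qed

lemma hor_level: assumes "hor a b" shows "fst a > k0" "fst b = fst a"
proof -
  have a: "a \<in> vert" and b: "b \<in> vert" and f: "fst a = fst b" and ne: "a \<noteq> b"
    using assms by (auto simp: horizontal_edge_def)
  show "fst b = fst a" using f by simp
  show "fst a > k0"
  proof (rule ccontr)
    assume "\<not> k0 < fst a"
    then have "fst a = k0" using vert_in[OF a] by simp
    then have "snd a = snd b" using V0 vert_in[OF a] vert_in[OF b] f by auto
    then show False using ne f by (simp add: prod_eq_iff)
  qed
qed

lemma hor_sym: "hor a b \<Longrightarrow> hor b a"
  unfolding horizontal_edge_def by (simp add: Int_commute eq_commute)

lemma rad_sym: "rad a b \<Longrightarrow> rad b a"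
  unfolding radial_edge_def by blast

lemma edge_sym: "edge a b \<Longrightarrow> edge b a"
  unfolding hedge_def using hor_sym rad_sym by blast

lemma edge_vert: "edge a b \<Longrightarrow> a \<in> vert \<and> b \<in> vert"
  unfolding hedge_def horizontal_edge_def radial_edge_def by blast

lemma edge_cases:
  assumes "edge a b"
  shows "(fst a = fst b \<and> hor a b) \<or> (fst b = fst a + 1 \<and> B b \<subseteq> B a)
   \<or> (fst a = fst b + 1 \<and> B a \<subseteq> B b)"
proof -
  have "hor a b \<or> rad a b" using assms unfolding hedge_def .
  then show ?thesis
  proof
    assume h: "hor a b"
    then have "fst b = fst a" by (rule hor_level(2))
    then show ?thesis using h by simp
  next
    assume "rad a b" then show ?thesis unfolding radial_edge_def by blast
  qed
qed

lemma hor_edge: "edge a b \<Longrightarrow> fst a = fst b \<Longrightarrow> hor a b"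
proof -
  assume e: "edge a b" and f: "fst a = fst b"
  show "hor a b" using edge_cases[OF e] f by auto
qed

lemma mk_rad: "a \<in> vert \<Longrightarrow> b \<in> vert \<Longrightarrow> fst b = fst a + 1 \<Longrightarrow> B b \<subseteq> B a \<Longrightarrow> edge a b \<and> edge b a"
  unfolding hedge_def radial_edge_def by blast

lemma mk_hor: "a \<in> vert \<Longrightarrow> b \<in> vert \<Longrightarrow> fst a = fst b \<Longrightarrow> a \<noteq> b \<Longrightarrow> C a \<inter> C b \<noteq> {} \<Longrightarrow> edge a b"
  unfolding hedge_def horizontal_edge_def by blast

lemma proj:
  assumes "C a \<inter> C b \<noteq> {}" "B a \<subseteq> B a'" "B b \<subseteq> B b'" "a' \<in> vert" "b' \<in> vert" "fst a' = fst b'"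
  shows "a' = b' \<or> edge a' b'"
proof -
  have "C a' \<inter> C b' \<noteq> {}" using assms C_mono[OF assms(2)] C_mono[OF assms(3)] by blast
  then show ?thesis using mk_hor assms by blast
qed

lemma ball_in:
  assumes "a \<in> vert" "u \<in> Z" "d (snd a) u < 2 * r powi (fst a - 1) - 2 * r powi (fst a)"
  shows "B a \<subseteq> B (fst a - 1, u)"
proof
  fix z assume z: "z \<in> B a"
  then have "z \<in> Z" "d z (snd a) < 2 * r powi fst a" by (auto simp: hball_def)
  moreover have "d z u \<le> d z (snd a) + d (snd a) u"
    using triangle vert_in assms \<open>z \<in> Z\<close> by blast
  ultimately show "z \<in> B (fst a - 1, u)" using assms by (auto simp: hball_def)
qed

lemma parent:
  assumes "a \<in> vert" "fst a > k0"
  shows "\<exists>u. (fst a - 1, u) \<in> vert \<and> B a \<subseteq> B (fst a - 1, u) \<and> d (snd a) u < r powi (fst a - 1)"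
proof -
  obtain u where u: "u \<in> V (fst a - 1)" "d (snd a) u < r powi (fst a - 1)"
    using close[of "fst a - 1" "snd a"] assms vert_in by auto
  have "k0 \<le> fst a - 1" using assms by simp
  then have uZ: "u \<in> Z" using V_sub u by blast
  have "r powi fst a \<le> r powi (fst a - 1) / 6"
    using powi_pred[of "fst a"] r_le rk_pos[of "fst a - 1"] by simp
  then have "d (snd a) u < 2 * r powi (fst a - 1) - 2 * r powi fst a"
    using u rk_pos[of "fst a"] by linarith
  then have "B a \<subseteq> B (fst a - 1, u)"
    by (rule ball_in[OF assms(1) uZ])
  then show ?thesis using u assms by (auto simp: hvertices_def)
qed

lemma hor_parent:
  assumes "hor a p" "(fst p - 1, u) \<in> vert" "d (snd p) u < r powi (fst p - 1)"
  shows "B a \<subseteq> B (fst p - 1, u)"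
proof -
  have a: "a \<in> vert" and p: "p \<in> vert" and f: "fst a = fst p"
    using assms by (auto simp: horizontal_edge_def)
  have uZ: "u \<in> Z" using vert_in[OF assms(2)] by simp
  have dd: "d (snd a) (snd p) \<le> 4 * r powi fst a" using hor_dist[OF assms(1)] .
  have "d (snd a) u \<le> d (snd a) (snd p) + d (snd p) u"
    using triangle vert_in a p uZ by blast
  moreover have "r powi fst a \<le> r powi (fst a - 1) / 6"
    using powi_pred[of "fst a"] r_le rk_pos[of "fst a - 1"] by simp
  ultimately have "d (snd a) u < 2 * r powi (fst a - 1) - 2 * r powi (fst a)"
    using dd assms(3) f by simp
  then show ?thesis using ball_in[OF a uZ] f by simp
qed


lemma path_Cons:
  assumes "hp p v w" "edge u v" shows "hp (u#p) u w"
proof -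
  have ne: "p \<noteq> []" and h: "hd p = v" and l: "last p = w" and s: "set p \<subseteq> vert"
    and e: "\<forall>i. Suc i < length p \<longrightarrow> edge (p!i) (p!Suc i)"
    using assms(1) by (auto simp: hpath_def)
  have u: "u \<in> vert" using edge_vert[OF assms(2)] by simp
  show ?thesis unfolding hpath_def
  proof (intro conjI allI impI)
    fix i assume i: "Suc i < length (u#p)"
    show "edge ((u#p)!i) ((u#p)!Suc i)"
    proof (cases i)
      case 0 then show ?thesis using assms(2) hd_conv_nth[OF ne] h by simp
    next
      case (Suc j) then show ?thesis using e i by simp
    qed
  qed (use ne l s u in auto)
qed

lemma path_tl:
  assumes "hp (v#u#p) x w" shows "hp (u#p) u w \<and> edge v u \<and> x = v"
proof -
  have l: "last (u#p) = w" and s: "set (u#p) \<subseteq> vert"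
    and e: "\<forall>i. Suc i < length (v#u#p) \<longrightarrow> edge ((v#u#p)!i) ((v#u#p)!Suc i)"
    and x: "x = v"
    using assms by (auto simp: hpath_def)
  have "edge v u" using e[rule_format, of 0] by simp
  moreover have "hp (u#p) u w" unfolding hpath_def
  proof (intro conjI allI impI)
    fix i assume i: "Suc i < length (u#p)"
    show "edge ((u#p)!i) ((u#p)!Suc i)" using e[rule_format, of "Suc i"] i by simp
  qed (use l s in auto)
  ultimately show ?thesis using x by simp
qed

lemma path_single: "v \<in> vert \<Longrightarrow> hp [v] v v"
  by (auto simp: hpath_def)

lemma path_snoc:
  assumes "hp p v u" "edge u w" shows "hp (p@[w]) v w"
proof -
  have ne: "p \<noteq> []" and h: "hd p = v" and l: "last p = u" and s: "set p \<subseteq> vert"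
    and e: "\<forall>i. Suc i < length p \<longrightarrow> edge (p!i) (p!Suc i)"
    using assms(1) by (auto simp: hpath_def)
  have w: "w \<in> vert" using edge_vert[OF assms(2)] by simp
  show ?thesis unfolding hpath_def
  proof (intro conjI allI impI)
    fix i assume i: "Suc i < length (p@[w])"
    show "edge ((p@[w])!i) ((p@[w])!Suc i)"
    proof (cases "Suc i < length p")
      case True then show ?thesis using e by (simp add: nth_append)
    next
      case False
      then have "i = length p - 1" "Suc i = length p" using i by auto
      then show ?thesis using assms(2) last_conv_nth[OF ne] l by (simp add: nth_append)
    qed
  qed (use ne h s w in auto)
qed

lemma geo_le: "hg p v w \<Longrightarrow> hp q v w \<Longrightarrow> length p \<le> length q"
  by (auto simp: hgeodesic_def)

lemma geo_eq_len: "hg p v w \<Longrightarrow> hg q v w \<Longrightarrow> length p = length q"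
  by (auto simp: hgeodesic_def intro: antisym)

lemma geo_of_len: "hg p v w \<Longrightarrow> hp q v w \<Longrightarrow> length q = length p \<Longrightarrow> hg q v w"
  by (auto simp: hgeodesic_def)

lemma path_from_root:
  assumes o0: "(k0, o0) \<in> vert"
  shows "w \<in> vert \<Longrightarrow> nat (fst w - k0) = n \<Longrightarrow> \<exists>p. hp p (k0, o0) w"
proof (induction n arbitrary: w)
  case 0
  then have "fst w = k0" using vert_in[OF 0(1)] by simp
  then have "snd w = o0" using V0 vert_in[OF 0(1)] vert_in[OF o0] by auto
  then have "w = (k0, o0)" using \<open>fst w = k0\<close> by (simp add: prod_eq_iff)
  then show ?case using path_single[OF o0] by blast
next
  case (Suc n)
  then have gt: "fst w > k0" by simp
  obtain u where u: "(fst w - 1, u) \<in> vert" "B w \<subseteq> B (fst w - 1, u)"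
    using parent[OF Suc(2) gt] by blast
  have "nat (fst (fst w - 1, u) - k0) = n" using Suc(3) by simp
  then obtain p where "hp p (k0, o0) (fst w - 1, u)" using Suc(1) u by blast
  moreover have "edge (fst w - 1, u) w" using mk_rad[OF u(1) Suc(2) _ u(2)] by simp
  ultimately show ?case using path_snoc by blast
qed

lemma conn_aux:
  assumes o0: "(k0, o0) \<in> vert" and w: "w \<in> vert"
  shows "v \<in> vert \<Longrightarrow> nat (fst v - k0) = n \<Longrightarrow> \<exists>p. hp p v w"
proof (induction n arbitrary: v)
  case 0
  then have "fst v = k0" using vert_in[OF 0(1)] by simp
  then have "snd v = o0" using V0 vert_in[OF 0(1)] vert_in[OF o0] by auto
  then have "v = (k0, o0)" using \<open>fst v = k0\<close> by (simp add: prod_eq_iff)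
  then show ?case using path_from_root[OF o0 w] by blast
next
  case (Suc n)
  then have gt: "fst v > k0" by simp
  obtain u where u: "(fst v - 1, u) \<in> vert" "B v \<subseteq> B (fst v - 1, u)"
    using parent[OF Suc(2) gt] by blast
  have "nat (fst (fst v - 1, u) - k0) = n" using Suc(3) by simp
  then obtain p where "hp p (fst v - 1, u) w" using Suc(1) u by blast
  moreover have "edge v (fst v - 1, u)" using mk_rad[OF u(1) Suc(2) _ u(2)] by simp
  ultimately show ?case using path_Cons by blast
qed

lemma conn: assumes "v \<in> vert" "w \<in> vert" shows "\<exists>p. hp p v w"
proof -
  obtain z where "z \<in> Z" using ha by (auto simp: hyp_approx_def)
  then obtain o0 where "o0 \<in> V k0" using close[of k0 z] by auto
  then have "(k0, o0) \<in> vert" by (simp add: hvertices_def)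
  then show ?thesis using conn_aux assms by blast
qed

lemma geo_ex: assumes "v \<in> vert" "w \<in> vert" shows "\<exists>p. hg p v w"
proof -
  obtain p0 where p0: "hp p0 v w" using conn assms by blast
  define n where "n = (LEAST n. \<exists>p. hp p v w \<and> length p = n)"
  have "\<exists>p. hp p v w \<and> length p = n" unfolding n_def by (rule LeastI_ex) (use p0 in blast)
  then obtain p where p: "hp p v w" "length p = n" by blast
  have "\<forall>q. hp q v w \<longrightarrow> length p \<le> length q"
    using p(2) unfolding n_def by (auto intro: Least_le)
  then show ?thesis using p by (auto simp: hgeodesic_def)
qed

end

inductive up :: "int list \<Rightarrow> bool" where
  up1: "up [x]" | up2: "up (y#L) \<Longrightarrow> y = x + 1 \<Longrightarrow> up (x#y#L)"

inductive canon :: "int list \<Rightarrow> bool" where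
  c_up: "up L \<Longrightarrow> canon L"
| c_hor: "up (y#L) \<Longrightarrow> x = y \<Longrightarrow> canon (x#y#L)"
| c_down: "canon (y#L) \<Longrightarrow> x = y + 1 \<Longrightarrow> canon (x#y#L)"

definition H :: "int list \<Rightarrow> nat set" where "H L = {i. Suc i < length L \<and> L!i = L!Suc i}"

lemma H_Cons: "H (x#y#L) = (if x = y then {0} else {}) \<union> Suc ` H (y#L)"
proof (rule set_eqI)
  fix i show "i \<in> H (x#y#L) \<longleftrightarrow> i \<in> (if x = y then {0} else {}) \<union> Suc ` H (y#L)"
    by (cases i) (auto simp: H_def)
qed

lemma H_single: "H [x] = {}" by (simp add: H_def)

lemma up_props: "up L \<Longrightarrow> H L = {} \<and> L \<noteq> [] \<and> Min (set L) = hd L"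
proof (induction rule: up.induct)
  case (up1 x) then show ?case by (simp add: H_single)
next
  case (up2 y L x)
  then show ?case by (simp add: H_Cons)
qed

lemma canon_props: "canon L \<Longrightarrow> L \<noteq> [] \<and> card (H L) \<le> 1 \<and> (\<forall>i\<in>H L. L!i = Min (set L))"
proof (induction rule: canon.induct)
  case (c_up L) then show ?case using up_props by auto
next
  case (c_hor y L x)
  then show ?case using up_props[OF c_hor(1)] by (simp add: H_Cons)
next
  case (c_down y L x)
  have m: "Min (set (y#L)) \<le> y" by simp
  have "Min (set (x#y#L)) = min x (Min (set (y#L)))"
    by (subst set_simps(2), rule Min_insert) auto
  also have "\<dots> = Min (set (y#L))" by (rule min_absorb2) (use m c_down.hyps(2) in linarith)
  finally have mEq: "Min (set (x#y#L)) = Min (set (y#L))" .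
  have hH: "H (x#y#L) = Suc ` H (y#L)" using c_down.hyps(2) by (simp add: H_Cons)
  have cE: "card (Suc ` H (y#L)) = card (H (y#L))" by (simp add: card_image)
  have ih1: "card (H (y#L)) \<le> 1" and ih2: "\<forall>i\<in>H (y#L). (y#L)!i = Min (set (y#L))"
    using c_down.IH by blast+
  show ?case
  proof (intro conjI)
    show "x#y#L \<noteq> []" by simp
    show "card (H (x#y#L)) \<le> 1" unfolding hH cE by (rule ih1)
    show "\<forall>i\<in>H (x#y#L). (x#y#L)!i = Min (set (x#y#L))"
    proof
      fix i assume "i \<in> H (x#y#L)"
      then obtain j where j: "j \<in> H (y#L)" "i = Suc j" using hH by auto
      then have "(x#y#L)!i = (y#L)!j" by simp
      also have "\<dots> = Min (set (y#L))" using ih2 j(1) by blast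
      also have "\<dots> = Min (set (x#y#L))" by (rule mEq[symmetric])
      finally show "(x#y#L)!i = Min (set (x#y#L))" .
    qed
  qed
qed

lemma canon_inv: "canon (a # b # L) \<Longrightarrow> up (a#b#L) \<or> (a = b \<and> up (b#L)) \<or> (a = b+1 \<and> canon (b#L))"
  by (erule canon.cases) auto


context HA begin

lemma main: "hg p v w \<Longrightarrow> \<exists>q. hg q v w \<and> canon (map fst q)"
proof (induction "length p" arbitrary: p v w rule: less_induct)
  case less
  have pp: "hp p v w" and short: "\<And>s. hp s v w \<Longrightarrow> length p \<le> length s"
    using less.prems by (auto simp: hgeodesic_def)
  have "p \<noteq> []" using pp unfolding hpath_def by blast
  then obtain x t where pxt: "p = x # t" by (cases p) auto
  show ?case
  proof (cases t)
    case Nil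
    have "canon (map fst p)" using pxt Nil by (simp add: c_up up1)
    then show ?thesis using less.prems by blast
  next
    case (Cons p1 rest)
    have "hp (x#p1#rest) v w" using pp pxt Cons by simp
    then have tl: "hp (p1#rest) p1 w" and ev: "edge v p1" and xv: "x = v"
      using path_tl by blast+
    have tgeo: "hg (p1#rest) p1 w"
      unfolding hgeodesic_def
    proof (intro conjI allI impI)
      fix s assume "hp s p1 w"
      then have "hp (v#s) v w" using path_Cons ev by blast
      from short[OF this] show "length (p1#rest) \<le> length s" using pxt Cons by simp
    qed (rule tl)
    obtain q where q: "hg q p1 w" "canon (map fst q)"
    proof -
      have "length (p1#rest) < length p" using pxt Cons by simp
      from less.hyps[OF this tgeo] show ?thesis using that by blast
    qed
    have lq: "length q = length (p1#rest)" using geo_eq_len[OF q(1) tgeo] .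
    have "q \<noteq> []" "hd q = p1" using q(1) unfolding hgeodesic_def hpath_def by blast+
    then obtain q' where qq: "q = p1 # q'" by (cases q) auto
    have qp: "hp (p1#q') p1 w" using q(1) qq by (simp add: hgeodesic_def)
    have lp: "length p = Suc (Suc (length q'))" using lq qq pxt Cons by simp
    have vq: "hg (v#p1#q') v w"
      using geo_of_len[OF less.prems path_Cons[OF qp ev]] lp by simp
    have cq: "canon (fst p1 # map fst q')" using q(2) qq by simp
    have cinv: "up (fst p1 # map fst q') \<or> (\<exists>q1 q''. q' = q1 # q'' \<and> fst q1 = fst p1 \<and> up (fst q1 # map fst q''))
       \<or> (\<exists>q1 q''. q' = q1 # q'' \<and> fst p1 = fst q1 + 1 \<and> canon (fst q1 # map fst q''))"
    proof (cases q')
      case Nil then show ?thesis by (auto intro: up1)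
    next
      case (Cons q1 q'')
      then show ?thesis using canon_inv[of "fst p1" "fst q1" "map fst q''"] cq by auto
    qed
    have v: "v \<in> vert" and p1v: "p1 \<in> vert" using edge_vert[OF ev] by auto
    consider (A) "fst v = fst p1 + 1" | (C) "fst p1 = fst v + 1" "B p1 \<subseteq> B v" | (Bh) "fst v = fst p1" "hor v p1"
      using edge_cases[OF ev] by auto
    then show ?thesis
    proof cases
      case A
      then have "canon (map fst (v#p1#q'))" using cq by (auto intro: c_down)
      then show ?thesis using vq by blast
    next
      case C
      from cinv consider (u) "up (fst p1 # map fst q')"
        | (h) q1 q'' where "q' = q1 # q''" "fst q1 = fst p1" "up (fst q1 # map fst q'')"
        | (dn) q1 q'' where "q' = q1 # q''" "fst p1 = fst q1 + 1" "canon (fst q1 # map fst q'')"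
        by blast
      then show ?thesis
      proof cases
        case u
        then have "canon (map fst (v#p1#q'))" using C by (auto intro: c_up up2)
        then show ?thesis using vq by blast
      next
        case h
        have tq: "hp (q1#q'') q1 w" and e1: "edge p1 q1" using path_tl[of p1 q1 q'' p1 w] qp h by auto
        have hq: "hor p1 q1" using hor_edge[OF e1] h by simp
        have q1v: "q1 \<in> vert" using edge_vert[OF e1] by simp
        have gt: "fst q1 > k0" using hor_level(1)[OF hq] h(2) by linarith
        obtain u where u: "(fst q1 - 1, u) \<in> vert" "B q1 \<subseteq> B (fst q1 - 1, u)"
          using parent[OF q1v gt] by blast
        have CC: "C p1 \<inter> C q1 \<noteq> {}" using hq by (simp add: horizontal_edge_def)
        have "v = (fst q1 - 1, u) \<or> edge v (fst q1 - 1, u)"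
          using proj[OF CC C(2) u(2) v u(1)] C h by simp
        then show ?thesis
        proof
          assume vu: "v = (fst q1 - 1, u)"
          have "edge v q1" using mk_rad[OF u(1) q1v _ u(2)] vu by simp
          then have "hp (v#q1#q'') v w" using path_Cons[OF tq] by blast
          from short[OF this] show ?thesis using lp h by simp
        next
          assume evu: "edge v (fst q1 - 1, u)"
          have "edge (fst q1 - 1, u) q1" using mk_rad[OF u(1) q1v _ u(2)] by simp
          then have "hp (v # (fst q1 - 1, u) # q1 # q'') v w"
            using path_Cons[OF path_Cons[OF tq] evu] by blast
          then have g: "hg (v # (fst q1 - 1, u) # q1 # q'') v w"
            using geo_of_len[OF less.prems] lp h by simp
          have "canon (map fst (v # (fst q1 - 1, u) # q1 # q''))"
            using h C by (auto intro!: c_hor up2)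
          then show ?thesis using g by blast
        qed
      next
        case dn
        have tq: "hp (q1#q'') q1 w" and e1: "edge p1 q1" using path_tl[of p1 q1 q'' p1 w] qp dn by auto
        have q1v: "q1 \<in> vert" using edge_vert[OF e1] by simp
        have bq: "B p1 \<subseteq> B q1" using edge_cases[OF e1] dn by auto
        have CC: "C p1 \<inter> C p1 \<noteq> {}" using B_C[OF p1v] by blast
        have "v = q1 \<or> edge v q1"
          using proj[OF CC C(2) bq v q1v] C dn by simp
        then show ?thesis
        proof
          assume "v = q1"
          then have "hp (q1#q'') v w" using tq by simp
          from short[OF this] show ?thesis using lp dn by simp
        next
          assume "edge v q1"
          then have "hp (v#q1#q'') v w" using path_Cons[OF tq] by blast
          from short[OF this] show ?thesis using lp dn by simp
        qed
      qed
    next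
      case Bh
      from cinv consider (u) "up (fst p1 # map fst q')"
        | (h) q1 q'' where "q' = q1 # q''" "fst q1 = fst p1" "up (fst q1 # map fst q'')"
        | (dn) q1 q'' where "q' = q1 # q''" "fst p1 = fst q1 + 1" "canon (fst q1 # map fst q'')"
        by blast
      then show ?thesis
      proof cases
        case u
        then have "canon (map fst (v#p1#q'))" using Bh by (auto intro: c_hor)
        then show ?thesis using vq by blast
      next
        case h
        have tq: "hp (q1#q'') q1 w" and e1: "edge p1 q1" using path_tl[of p1 q1 q'' p1 w] qp h by auto
        have "hor p1 q1" using hor_edge[OF e1] h(2) by simp
        then have hq: "hor q1 p1" by (rule hor_sym)
        have q1v: "q1 \<in> vert" using edge_vert[OF e1] by simp
        have gt: "fst p1 > k0" using hor_level(1)[OF Bh(2)] Bh(1) by linarith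
        obtain u where u: "(fst p1 - 1, u) \<in> vert" "d (snd p1) u < r powi (fst p1 - 1)"
          using parent[OF p1v gt] by blast
        have b1: "B v \<subseteq> B (fst p1 - 1, u)" using hor_parent[OF Bh(2) u] .
        have b2: "B q1 \<subseteq> B (fst p1 - 1, u)" using hor_parent[OF hq u] .
        have e2: "edge (fst p1 - 1, u) q1" using mk_rad[OF u(1) q1v _ b2] h by simp
        have e3: "edge v (fst p1 - 1, u)" using mk_rad[OF u(1) v _ b1] Bh by simp
        have "hp (v # (fst p1 - 1, u) # q1 # q'') v w"
          using path_Cons[OF path_Cons[OF tq e2] e3] .
        then have g: "hg (v # (fst p1 - 1, u) # q1 # q'') v w"
          using geo_of_len[OF less.prems] lp h by simp
        have u1: "up (fst q1 # map fst q'')" using h by simp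
        have "up ((fst p1 - 1) # fst q1 # map fst q'')" by (rule up2[OF u1]) (use h in simp)
        then have "canon ((fst p1 - 1) # fst q1 # map fst q'')" by (rule c_up)
        then have "canon (fst v # (fst p1 - 1) # fst q1 # map fst q'')" by (rule c_down) (use Bh in simp)
        then have "canon (map fst (v # (fst p1 - 1, u) # q1 # q''))" by simp
        then show ?thesis using g by blast
      next
        case dn
        have tq: "hp (q1#q'') q1 w" and e1: "edge p1 q1" using path_tl[of p1 q1 q'' p1 w] qp dn by auto
        have q1v: "q1 \<in> vert" using edge_vert[OF e1] by simp
        have bq: "B p1 \<subseteq> B q1" using edge_cases[OF e1] dn by auto
        have "fst q1 \<ge> k0" using vert_in[OF q1v] by blast
        then have gt: "fst v > k0" using dn(2) Bh(1) by linarith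
        obtain u where u: "(fst v - 1, u) \<in> vert" "B v \<subseteq> B (fst v - 1, u)"
          using parent[OF v gt] by blast
        have CC: "C v \<inter> C p1 \<noteq> {}" using Bh(2) by (simp add: horizontal_edge_def)
        have evu: "edge v (fst v - 1, u)" using mk_rad[OF u(1) v _ u(2)] by simp
        have lev: "fst (fst v - 1, u) = fst q1" using Bh(1) dn(2) by simp
        have "(fst v - 1, u) = q1 \<or> edge (fst v - 1, u) q1"
          using proj[OF CC u(2) bq u(1) q1v lev] .
        then show ?thesis
        proof
          assume "(fst v - 1, u) = q1"
          then have "hp (v#q1#q'') v w" using path_Cons[OF tq] evu by blast
          from short[OF this] show ?thesis using lp dn by simp
        next
          assume e4: "edge (fst v - 1, u) q1"
          define s0 where "s0 = (fst v - 1, u) # q1 # q''"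
          have s0p: "hp s0 (fst v - 1, u) w" unfolding s0_def using path_Cons[OF tq e4] .
          have s0g: "hg s0 (fst v - 1, u) w" unfolding hgeodesic_def
          proof (intro conjI allI impI)
            fix s assume "hp s (fst v - 1, u) w"
            then have "hp (v#s) v w" using path_Cons evu by blast
            from short[OF this] show "length s0 \<le> length s" using lp dn s0_def by simp
          qed (rule s0p)
          obtain s where s: "hg s (fst v - 1, u) w" "canon (map fst s)"
                proof -
            have "length s0 < length p" using lp dn s0_def by simp
            from less.hyps[OF this s0g] show ?thesis using that by blast
          qed
          obtain s' where ss: "s = (fst v - 1, u) # s'" using s(1)
            using s(1) unfolding hgeodesic_def hpath_def by (cases s) auto
          have ls: "length s = length s0" using geo_eq_len[OF s(1) s0g] .
          have "hp (v#s) v w" using path_Cons[OF _ evu] s(1) by (simp add: hgeodesic_def)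
          then have g: "hg (v#s) v w"
            using geo_of_len[OF less.prems] lp dn ls s0_def by simp
          have "canon (map fst (v#s))" using s(2) ss by (auto intro: c_down)
          then show ?thesis using g by blast
        qed
      qed
    qed
  qed
qed

lemma hpos: "hp q v w \<Longrightarrow> horizontal_positions Z d r k0 V q = H (map fst q)"
proof (rule set_eqI)
  fix i assume qp: "hp q v w"
  show "i \<in> horizontal_positions Z d r k0 V q \<longleftrightarrow> i \<in> H (map fst q)"
  proof
    assume "i \<in> horizontal_positions Z d r k0 V q"
    then have "Suc i < length q" "hor (q!i) (q!Suc i)" by (auto simp: horizontal_positions_def)
    moreover then have "fst (q!Suc i) = fst (q!i)" using hor_level(2) by blast
    ultimately show "i \<in> H (map fst q)" by (simp add: H_def)
  next
    assume i: "i \<in> H (map fst q)"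
    then have "edge (q!i) (q!Suc i)" using qp by (auto simp: H_def hpath_def)
    moreover have f: "fst (q!i) = fst (q!Suc i)" "Suc i < length q" using i by (auto simp: H_def)
    ultimately have "hor (q!i) (q!Suc i)" using hor_edge by blast
    then show "i \<in> horizontal_positions Z d r k0 V q" using f
      by (auto simp: horizontal_positions_def)
  qed
qed

end

theorem mainTheorem8:
  fixes Z :: "'a set" and d :: "'a \<Rightarrow> 'a \<Rightarrow> real" and r :: real and k0 :: int
    and V :: "int \<Rightarrow> 'a set"
  assumes "hyp_approx Z d r k0 V"
    and "v \<in> hvertices k0 V" and "w \<in> hvertices k0 V"
  shows "\<exists>p. hgeodesic Z d r k0 V p v w \<and>
           card (horizontal_positions Z d r k0 V p) \<le> 1 \<and>
           (\<forall>i \<in> horizontal_positions Z d r k0 V p.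
              fst (p ! i) = Min (fst ` set p))"
proof -
  interpret HA Z d r k0 V using assms(1) by unfold_locales
  obtain p0 where "hg p0 v w" using geo_ex assms by blast
  then obtain q where q: "hg q v w" "canon (map fst q)" using main by blast
  have "hp q v w" using q(1) by (simp add: hgeodesic_def)
  then have hq: "horizontal_positions Z d r k0 V q = H (map fst q)" by (rule hpos)
  have cp: "card (H (map fst q)) \<le> 1" "\<forall>i\<in>H (map fst q). (map fst q)!i = Min (set (map fst q))"
    using canon_props[OF q(2)] by auto
  have "\<forall>i \<in> horizontal_positions Z d r k0 V q. fst (q ! i) = Min (fst ` set q)"
  proof
    fix i assume "i \<in> horizontal_positions Z d r k0 V q"
    then have "i \<in> H (map fst q)" "i < length q" using hq by (auto simp: H_def)
    moreover from this(1) have "(map fst q)!i = Min (set (map fst q))" using cp(2) by blast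
    ultimately show "fst (q ! i) = Min (fst ` set q)" by simp
  qed
  then show ?thesis using q(1) cp(1) hq by (intro exI[of _ q]) simp
qed

end
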